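(* Let $K$ be an integral domain (not necessarily Noetherian) and $X$ a set. No proper non-zero ideal $I$ of the free $K$-algebra $K\langle X\rangle$ is free as a $K$-algebra, i.e. there is no set $Y$ with $I\cong K\langle Y\rangle$ as $K$-algebras.
   Context: The free $K$-algebra $K\langle X\rangle$ is the semigroup ring over $K$ of the free semigroup $X^+$ (polynomials in non-commuting variables without constant term; no identity). Integral domains are commutative with $1$. *)

theory Defs
  imports Main
begin

text \<open>The free (non-unital) K-algebra K<X> on a set X: finitely supported
  K-valued functions on the free semigroup X^+ (non-empty words over X),
  represented as functions on lists vanishing outside non-empty words over X.\<close>

definition free_alg :: "'x set \<Rightarrow> ('x list \<Rightarrow> 'k::idom) set" where
  "free_alg X = {f. finite {w. f w \<noteq> 0} \<and> (\<forall>w. f w \<noteq> 0 \<longrightarrow> w \<noteq> [] \<and> set w \<subseteq> X)}"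

definition fa_add :: "('x list \<Rightarrow> 'k::idom) \<Rightarrow> ('x list \<Rightarrow> 'k) \<Rightarrow> ('x list \<Rightarrow> 'k)" where
  "fa_add f g = (\<lambda>w. f w + g w)"

definition fa_smult :: "'k::idom \<Rightarrow> ('x list \<Rightarrow> 'k) \<Rightarrow> ('x list \<Rightarrow> 'k)" where
  "fa_smult c f = (\<lambda>w. c * f w)"

definition fa_mult :: "('x list \<Rightarrow> 'k::idom) \<Rightarrow> ('x list \<Rightarrow> 'k) \<Rightarrow> ('x list \<Rightarrow> 'k)" where
  "fa_mult f g = (\<lambda>w. \<Sum>p\<in>{(u, v). u @ v = w}. f (fst p) * g (snd p))"

definition fa_ideal :: "'x set \<Rightarrow> ('x list \<Rightarrow> 'k::idom) set \<Rightarrow> bool" where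
  "fa_ideal X I \<longleftrightarrow> I \<subseteq> free_alg X \<and> (\<lambda>w. 0) \<in> I
     \<and> (\<forall>f\<in>I. \<forall>g\<in>I. fa_add f g \<in> I)
     \<and> (\<forall>c. \<forall>f\<in>I. fa_smult c f \<in> I)
     \<and> (\<forall>f\<in>I. \<forall>g\<in>free_alg X. fa_mult f g \<in> I \<and> fa_mult g f \<in> I)"

definition fa_alg_iso ::
  "(('x list \<Rightarrow> 'k::idom) \<Rightarrow> ('y list \<Rightarrow> 'k)) \<Rightarrow> ('x list \<Rightarrow> 'k) set \<Rightarrow> ('y list \<Rightarrow> 'k) set \<Rightarrow> bool" where
  "fa_alg_iso \<phi> A B \<longleftrightarrow> bij_betw \<phi> A B
     \<and> (\<forall>f\<in>A. \<forall>g\<in>A. \<phi> (fa_add f g) = fa_add (\<phi> f) (\<phi> g))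
     \<and> (\<forall>c. \<forall>f\<in>A. \<phi> (fa_smult c f) = fa_smult c (\<phi> f))
     \<and> (\<forall>f\<in>A. \<forall>g\<in>A. \<phi> (fa_mult f g) = fa_mult (\<phi> f) (\<phi> g))"

end

theory Submission
  imports Defs
begin

definition dl :: "'a list \<Rightarrow> 'a list \<Rightarrow> 'k::idom" where
  "dl w = (\<lambda>v. if v = w then 1 else 0)"

lemma splits_eq: "{(u,v). u @ v = w} = (\<lambda>i. (take i w, drop i w)) ` {..length w}"
proof (rule set_eqI, rule iffI)
  fix p assume "p \<in> {(u,v). u @ v = w}"
  then obtain u v where p: "p = (u,v)" "u @ v = w" by auto
  then show "p \<in> (\<lambda>i. (take i w, drop i w)) ` {..length w}"
    by (auto simp: image_iff intro!: bexI[of _ "length u"])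
qed auto

lemma finite_splits: "finite {(u,v). u @ v = w}"
  by (simp add: splits_eq)

lemma sum_single:
  assumes "finite S" "a \<in> S" "\<And>p. p \<in> S \<Longrightarrow> p \<noteq> a \<Longrightarrow> F p = 0"
  shows "sum F S = F a"
proof -
  have "sum F S = F a + sum F (S - {a})" using assms(1,2) by (rule sum.remove)
  also have "sum F (S - {a}) = 0" using assms(3) by (intro sum.neutral) auto
  finally show ?thesis by simp
qed

lemma fa_mult_assoc:
  fixes f g h :: "'a list \<Rightarrow> 'k::idom"
  shows "fa_mult f (fa_mult g h) = fa_mult (fa_mult f g) h"
proof
  fix w :: "'a list"
  let ?T = "{(a,b,c). a @ b @ c = w}"
  have L: "fa_mult f (fa_mult g h) w = (\<Sum>t\<in>?T. f (fst t) * g (fst (snd t)) * h (snd (snd t)))"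
  proof -
    have "fa_mult f (fa_mult g h) w = (\<Sum>p\<in>{(u,v). u @ v = w}. \<Sum>q\<in>{(a,b). a @ b = snd p}. f (fst p) * (g (fst q) * h (snd q)))"
      by (simp add: fa_mult_def sum_distrib_left)
    also have "\<dots> = (\<Sum>(p,q)\<in>Sigma {(u,v). u @ v = w} (\<lambda>p. {(a,b). a @ b = snd p}). f (fst p) * (g (fst q) * h (snd q)))"
      by (rule sum.Sigma) (auto simp: finite_splits)
    also have "\<dots> = (\<Sum>t\<in>?T. f (fst t) * g (fst (snd t)) * h (snd (snd t)))"
      by (rule sum.reindex_bij_witness[where i = "\<lambda>(a,b,c). ((a, b@c),(b,c))" and j = "\<lambda>(p,q). (fst p, fst q, snd q)"])
         (auto simp: mult.assoc)
    finally show ?thesis .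
  qed
  have R: "fa_mult (fa_mult f g) h w = (\<Sum>t\<in>?T. f (fst t) * g (fst (snd t)) * h (snd (snd t)))"
  proof -
    have "fa_mult (fa_mult f g) h w = (\<Sum>p\<in>{(u,v). u @ v = w}. \<Sum>q\<in>{(a,b). a @ b = fst p}. f (fst q) * g (snd q) * h (snd p))"
      by (simp add: fa_mult_def sum_distrib_right)
    also have "\<dots> = (\<Sum>(p,q)\<in>Sigma {(u,v). u @ v = w} (\<lambda>p. {(a,b). a @ b = fst p}). f (fst q) * g (snd q) * h (snd p))"
      by (rule sum.Sigma) (auto simp: finite_splits)
    also have "\<dots> = (\<Sum>t\<in>?T. f (fst t) * g (fst (snd t)) * h (snd (snd t)))"
      by (rule sum.reindex_bij_witness[where i = "\<lambda>(a,b,c). ((a@b, c),(a,b))" and j = "\<lambda>(p,q). (fst q, snd q, snd p)"])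
         auto
    finally show ?thesis .
  qed
  show "fa_mult f (fa_mult g h) w = fa_mult (fa_mult f g) h w" using L R by simp
qed

lemma dl_left_Cons: "fa_mult (dl [a]) F (a # w) = F w"
  unfolding fa_mult_def
  by (subst sum_single[where a = "([a], w)"]) (auto simp: finite_splits dl_def Cons_eq_append_conv)

lemma dl_left_not: "(\<And>w. v \<noteq> a # w) \<Longrightarrow> fa_mult (dl [a]) F v = 0"
  unfolding fa_mult_def
  by (rule sum.neutral) (auto simp: dl_def)

lemma dl_right_snoc: "fa_mult F (dl [a]) (u @ [a]) = F u"
  unfolding fa_mult_def
  by (subst sum_single[where a = "(u, [a])"]) (auto simp: finite_splits dl_def)

lemma dl_right_not: "(\<And>u. v \<noteq> u @ [a]) \<Longrightarrow> fa_mult F (dl [a]) v = 0"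
  unfolding fa_mult_def
  by (rule sum.neutral) (auto simp: dl_def)

lemma dl_right_ex: assumes "fa_mult F (dl [a]) v \<noteq> 0" shows "\<exists>u. v = u @ [a]"
proof (rule ccontr)
  assume "\<not> (\<exists>u. v = u @ [a])"
  then show False using dl_right_not[of v a F] assms by auto
qed

lemma dl_in:
  assumes "w \<noteq> []" "set w \<subseteq> X"
  shows "(dl w :: 'a list \<Rightarrow> 'k::idom) \<in> free_alg X"
proof -
  have s: "{v. (dl w :: 'a list \<Rightarrow> 'k) v \<noteq> 0} \<subseteq> {w}" unfolding dl_def by auto
  then have "finite {v. (dl w :: 'a list \<Rightarrow> 'k) v \<noteq> 0}" by (rule finite_subset) simp
  moreover have "\<forall>v. (dl w :: 'a list \<Rightarrow> 'k) v \<noteq> 0 \<longrightarrow> v \<noteq> [] \<and> set v \<subseteq> X"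
    using s assms by blast
  ultimately show ?thesis unfolding free_alg_def by blast
qed

lemma dl_Cons_mult:
  fixes x :: 'a and w' :: "'a list"
  shows "fa_mult (dl [x]) (dl w') = (dl (x # w') :: 'a list \<Rightarrow> 'k::idom)"
proof
  fix v :: "'a list"
  show "fa_mult (dl [x]) (dl w') v = (dl (x # w') v :: 'k)"
  proof (cases "\<exists>v'. v = x # v'")
    case True
    then obtain v' where v: "v = x # v'" by blast
    have "fa_mult (dl [x]) (dl w') v = (dl w' v' :: 'k)" using dl_left_Cons[of x "dl w'" v'] v by simp
    moreover have "dl (x # w') v = (dl w' v' :: 'k)" using v by (simp add: dl_def)
    ultimately show ?thesis by simp
  next
    case False
    then have "fa_mult (dl [x]) (dl w') v = (0::'k)" by (intro dl_left_not) auto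
    moreover have "dl (x # w') v = (0 :: 'k)" using False by (auto simp: dl_def)
    ultimately show ?thesis by simp
  qed
qed

lemma mult_lin:
  "fa_mult (\<lambda>u. F u - G u - (if u = [] then c else 0)) g w
     = fa_mult F g w - fa_mult G g w - c * g w"
proof -
  have "fa_mult (\<lambda>u. F u - G u - (if u = [] then c else 0)) g w
     = (\<Sum>p\<in>{(u, v). u @ v = w}. F (fst p) * g (snd p)) - (\<Sum>p\<in>{(u, v). u @ v = w}. G (fst p) * g (snd p))
       - (\<Sum>p\<in>{(u, v). u @ v = w}. (if fst p = [] then c else 0) * g (snd p))"
    unfolding fa_mult_def by (simp add: left_diff_distrib sum_subtractf)
  also have "(\<Sum>p\<in>{(u, v). u @ v = w}. (if fst p = [] then c else 0) * g (snd p)) = c * g w"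
    by (subst sum_single[where a = "([], w)"]) (auto simp: finite_splits)
  finally show ?thesis by (simp add: fa_mult_def)
qed

lemma mult_nonzero:
  fixes p g :: "'a list \<Rightarrow> 'k::idom"
  assumes fp: "finite {w. p w \<noteq> 0}" and fg: "finite {w. g w \<noteq> 0}"
    and p0: "p \<noteq> (\<lambda>w. 0)" and g0: "g \<noteq> (\<lambda>w. 0)"
  shows "fa_mult p g \<noteq> (\<lambda>w. 0)"
proof -
  let ?P = "{w. p w \<noteq> 0}" and ?G = "{w. g w \<noteq> 0}"
  have neP: "?P \<noteq> {}" using p0 by auto
  have neG: "?G \<noteq> {}" using g0 by auto
  define m where "m = Max (length ` ?P)"
  define n where "n = Max (length ` ?G)"
  have "m \<in> length ` ?P" unfolding m_def using fp neP by (intro Max_in) auto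
  then obtain u0 where u0: "p u0 \<noteq> 0" "length u0 = m" by auto
  have "n \<in> length ` ?G" unfolding n_def using fg neG by (intro Max_in) auto
  then obtain v0 where v0: "g v0 \<noteq> 0" "length v0 = n" by auto
  have "fa_mult p g (u0 @ v0) = p u0 * g v0"
    unfolding fa_mult_def
  proof (subst sum_single[where a = "(u0, v0)"])
    show "finite {(u, v). u @ v = u0 @ v0}" by (rule finite_splits)
    show "(u0, v0) \<in> {(u, v). u @ v = u0 @ v0}" by simp
    fix q assume q: "q \<in> {(u, v). u @ v = u0 @ v0}" "q \<noteq> (u0, v0)"
    show "p (fst q) * g (snd q) = 0"
    proof (rule ccontr)
      assume "p (fst q) * g (snd q) \<noteq> 0"
      then have a: "p (fst q) \<noteq> 0" "g (snd q) \<noteq> 0" by auto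
      have "length (fst q) \<le> m" unfolding m_def using a fp by (intro Max_ge) auto
      moreover have "length (snd q) \<le> n" unfolding n_def using a fg by (intro Max_ge) auto
      moreover have "length (fst q) + length (snd q) = m + n"
        using q u0 v0 by (auto dest: arg_cong[of _ _ length])
      ultimately have "length (fst q) = length u0" using u0 by simp
      then have "fst q = u0 \<and> snd q = v0" using q by (auto simp: append_eq_append_conv)
      then show False using q by (cases q) auto
    qed
  qed simp
  then have "fa_mult p g (u0 @ v0) \<noteq> 0" using u0 v0 by simp
  then show ?thesis by (metis)
qed

theorem lemma6p4:
  fixes X :: "'x set" and Y :: "'y set" and I :: "('x list \<Rightarrow> 'k::idom) set"
  assumes "fa_ideal X I"
    and "I \<noteq> free_alg X"
    and "\<exists>f\<in>I. f \<noteq> (\<lambda>w. 0)"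
  shows "\<not> (\<exists>\<phi>. fa_alg_iso \<phi> I (free_alg Y :: ('y list \<Rightarrow> 'k) set))"
proof
  assume "\<exists>\<phi>. fa_alg_iso \<phi> I (free_alg Y :: ('y list \<Rightarrow> 'k) set)"
  then obtain \<phi> :: "('x list \<Rightarrow> 'k) \<Rightarrow> ('y list \<Rightarrow> 'k)" where iso: "fa_alg_iso \<phi> I (free_alg Y)" by blast
  have isoD: "bij_betw \<phi> I (free_alg Y)
     \<and> (\<forall>f\<in>I. \<forall>g\<in>I. \<phi> (fa_add f g) = fa_add (\<phi> f) (\<phi> g))
     \<and> (\<forall>c. \<forall>f\<in>I. \<phi> (fa_smult c f) = fa_smult c (\<phi> f))
     \<and> (\<forall>f\<in>I. \<forall>g\<in>I. \<phi> (fa_mult f g) = fa_mult (\<phi> f) (\<phi> g))"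
    using iso unfolding fa_alg_iso_def .
  have bij: "bij_betw \<phi> I (free_alg Y)" using isoD by blast
  have add: "\<And>f g. f \<in> I \<Longrightarrow> g \<in> I \<Longrightarrow> \<phi> (fa_add f g) = fa_add (\<phi> f) (\<phi> g)"
    using isoD by blast
  have sm: "\<And>c f. f \<in> I \<Longrightarrow> \<phi> (fa_smult c f) = fa_smult c (\<phi> f)"
    using isoD by blast
  have mul: "\<And>f g. f \<in> I \<Longrightarrow> g \<in> I \<Longrightarrow> \<phi> (fa_mult f g) = fa_mult (\<phi> f) (\<phi> g)"
    using isoD by blast
  have inj: "inj_on \<phi> I" and img: "\<phi> ` I = free_alg Y" using bij unfolding bij_betw_def by blast+
  have idD: "I \<subseteq> free_alg X \<and> (\<lambda>w. 0) \<in> I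
     \<and> (\<forall>f\<in>I. \<forall>g\<in>I. fa_add f g \<in> I)
     \<and> (\<forall>c. \<forall>f\<in>I. fa_smult c f \<in> I)
     \<and> (\<forall>f\<in>I. \<forall>g\<in>free_alg X. fa_mult f g \<in> I \<and> fa_mult g f \<in> I)"
    using assms(1) unfolding fa_ideal_def .
  have Isub: "I \<subseteq> free_alg X" and I0: "(\<lambda>w. 0) \<in> I" using idD by blast+
  have Iadd: "\<And>f g. f \<in> I \<Longrightarrow> g \<in> I \<Longrightarrow> fa_add f g \<in> I" using idD by blast
  have Ism: "\<And>c f. f \<in> I \<Longrightarrow> fa_smult c f \<in> I" using idD by blast
  have Imul: "\<And>f g. f \<in> I \<Longrightarrow> g \<in> free_alg X \<Longrightarrow> fa_mult f g \<in> I \<and> fa_mult g f \<in> I"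
    using idD by blast
  have phi0: "\<phi> (\<lambda>w. 0) = (\<lambda>w. 0)"
  proof -
    have "fa_smult 0 (\<lambda>w::'x list. 0::'k) = (\<lambda>w. 0)" by (simp add: fa_smult_def)
    then have "\<phi> (\<lambda>w. 0) = \<phi> (fa_smult 0 (\<lambda>w::'x list. 0::'k))" by simp
    also have "\<dots> = fa_smult 0 (\<phi> (\<lambda>w. 0))" by (rule sm[OF I0])
    finally have "\<phi> (\<lambda>w. 0) = fa_smult 0 (\<phi> (\<lambda>w. 0))" .
    then show ?thesis by (simp add: fa_smult_def)
  qed
  have phinz: "\<And>f. f \<in> I \<Longrightarrow> f \<noteq> (\<lambda>w. 0) \<Longrightarrow> \<phi> f \<noteq> (\<lambda>w. 0)"
    using inj_onD[OF inj _ _ I0] phi0 by metis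
  obtain f0 where f0: "f0 \<in> I" "f0 \<noteq> (\<lambda>w. 0)" using assms(3) by blast
  have "\<phi> f0 \<in> free_alg Y" using f0 img by auto
  moreover have "\<phi> f0 \<noteq> (\<lambda>w. 0)" using phinz f0 by blast
  then obtain w0 where "\<phi> f0 w0 \<noteq> 0" by auto
  ultimately have w0: "w0 \<noteq> []" "set w0 \<subseteq> Y" unfolding free_alg_def by auto
  define y0 where "y0 = hd w0"
  have y0Y: "y0 \<in> Y" using w0 unfolding y0_def by (cases w0) auto
  define y :: "'y list \<Rightarrow> 'k" where "y = dl [y0]"
  have yF: "y \<in> free_alg Y" unfolding y_def using y0Y by (intro dl_in) auto
  have "y \<in> \<phi> ` I" using yF img by simp
  then obtain g0 where g0: "g0 \<in> I" "\<phi> g0 = y" by blast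
  have g0X: "g0 \<in> free_alg X" using g0 Isub by auto
  have g0nz: "g0 \<noteq> (\<lambda>w. 0)"
  proof
    assume "g0 = (\<lambda>w. 0)"
    then have "y = (\<lambda>w. 0)" using g0 phi0 by simp
    then show False using fun_cong[of y "\<lambda>w. 0" "[y0]"] unfolding y_def dl_def by simp
  qed
  have xI: "dl [x] \<in> I" if xX: "x \<in> X" for x
  proof -
    define d :: "'x list \<Rightarrow> 'k" where "d = dl [x]"
    have dX: "d \<in> free_alg X" unfolding d_def using xX by (intro dl_in) auto
    define a where "a = fa_mult d g0"
    define b where "b = fa_mult g0 d"
    have aI: "a \<in> I" and bI: "b \<in> I" using Imul[OF g0(1) dX] unfolding a_def b_def by auto
    define A where "A = \<phi> a"
    define B where "B = \<phi> b"
    have AY: "A \<in> free_alg Y" and BY: "B \<in> free_alg Y" using aI bI img unfolding A_def B_def by auto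
    have "fa_mult g0 a = fa_mult b g0" unfolding a_def b_def by (simp add: fa_mult_assoc)
    then have eq: "fa_mult y A = fa_mult B y" using mul[OF g0(1) aI] mul[OF bI g0(1)] g0(2)
      unfolding A_def B_def by simp
    have A0: "A [] = 0" using AY unfolding free_alg_def by auto
    have Aend: "w \<noteq> [] \<and> last w = y0" if "A w \<noteq> 0" for w
    proof -
      have wne: "w \<noteq> []" using that A0 by auto
      have "A w = fa_mult y A (y0 # w)" unfolding y_def by (simp add: dl_left_Cons)
      also have "\<dots> = fa_mult B y (y0 # w)" using eq by simp
      finally have "fa_mult B y (y0 # w) \<noteq> 0" using that by simp
      then have "fa_mult B (dl [y0]) (y0 # w) \<noteq> 0" unfolding y_def .
      from dl_right_ex[OF this] obtain u where "y0 # w = u @ [y0]" by blast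
      then have "last (y0 # w) = y0" by simp
      then show ?thesis using wne by simp
    qed
    define c where "c = A [y0]"
    define Z where "Z = (\<lambda>u. if u = [] then 0 else A (u @ [y0]))"
    have "{u. Z u \<noteq> 0} \<subseteq> butlast ` {w. A w \<noteq> 0}"
    proof
      fix u assume "u \<in> {u. Z u \<noteq> 0}"
      then have "A (u @ [y0]) \<noteq> 0" unfolding Z_def by (auto split: if_splits)
      then show "u \<in> butlast ` {w. A w \<noteq> 0}" by (auto intro!: image_eqI[of _ _ "u @ [y0]"])
    qed
    moreover have "finite {w. A w \<noteq> 0}" using AY unfolding free_alg_def by auto
    ultimately have "finite {u. Z u \<noteq> 0}" by (meson finite_imageI finite_subset)
    moreover have "Z u \<noteq> 0 \<longrightarrow> u \<noteq> [] \<and> set u \<subseteq> Y" for u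
    proof
      assume "Z u \<noteq> 0"
      then have un: "u \<noteq> []" and "A (u @ [y0]) \<noteq> 0" by (auto simp: Z_def split: if_splits)
      then have "set (u @ [y0]) \<subseteq> Y" using AY unfolding free_alg_def by blast
      then show "u \<noteq> [] \<and> set u \<subseteq> Y" using un by simp
    qed
    ultimately have ZY: "Z \<in> free_alg Y" unfolding free_alg_def by auto
    have Adec: "A = fa_add (fa_smult c y) (fa_mult Z y)"
    proof
      fix w
      show "A w = fa_add (fa_smult c y) (fa_mult Z y) w"
      proof (cases "\<exists>u. w = u @ [y0]")
        case True
        then obtain u where u: "w = u @ [y0]" by blast
        show ?thesis
        proof (cases "u = []")
          case True
          have m: "fa_mult Z (dl [y0]) [y0] = Z []" using dl_right_snoc[where u = "[]" and F = Z and a = y0] by simp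
          have "dl [y0] [y0] = (1::'k)" unfolding dl_def by simp
          then show ?thesis using u True m unfolding fa_add_def fa_smult_def c_def y_def
            by (simp add: Z_def)
        next
          case False
          have m: "fa_mult Z (dl [y0]) (u @ [y0]) = Z u" using dl_right_snoc[where u = u and F = Z and a = y0] by simp
          have "dl [y0] w = (0::'k)" unfolding dl_def using u False by simp
          then show ?thesis using u False m unfolding fa_add_def fa_smult_def y_def
            by (simp add: Z_def)
        qed
      next
        case False
        have "A w = 0"
        proof (rule ccontr)
          assume "A w \<noteq> 0"
          then have "w \<noteq> [] \<and> last w = y0" by (rule Aend)
          then have "w = butlast w @ [y0]" by (metis append_butlast_last_id)
          then show False using False by blast
        qed
        moreover have "fa_mult Z y w = 0" unfolding y_def using False by (intro dl_right_not) auto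
        moreover have "y w = 0" unfolding y_def dl_def using False by auto
        ultimately show ?thesis unfolding fa_add_def fa_smult_def by simp
      qed
    qed
    have "Z \<in> \<phi> ` I" using ZY img by simp
    then obtain t where t: "t \<in> I" "\<phi> t = Z" by blast
    have tX: "t \<in> free_alg X" using t Isub by auto
    have c1: "fa_smult c g0 \<in> I" using Ism g0 by auto
    have c2: "fa_mult t g0 \<in> I" using Imul[OF t(1) g0X] by auto
    have "\<phi> (fa_add (fa_smult c g0) (fa_mult t g0)) = A"
      using add[OF c1 c2] sm[OF g0(1)] mul[OF t(1) g0(1)] g0(2) t(2) Adec by simp
    then have aeq: "fa_mult d g0 = fa_add (fa_smult c g0) (fa_mult t g0)"
      using inj_onD[OF inj _ aI Iadd[OF c1 c2]] unfolding A_def a_def by simp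
    define p where "p = (\<lambda>u. d u - t u - (if u = [] then c else 0))"
    have pg: "fa_mult p g0 = (\<lambda>w. 0)"
    proof
      fix w
      have "fa_mult d g0 w = c * g0 w + fa_mult t g0 w"
        using fun_cong[OF aeq, of w] unfolding fa_add_def fa_smult_def by simp
      then show "fa_mult p g0 w = 0" unfolding p_def mult_lin by simp
    qed
    have "{w. p w \<noteq> 0} \<subseteq> {[x], []} \<union> {w. t w \<noteq> 0}"
      unfolding p_def d_def dl_def by auto
    moreover have "finite {w. t w \<noteq> 0}" using tX unfolding free_alg_def by auto
    ultimately have fp: "finite {w. p w \<noteq> 0}" by (meson finite_Un finite.insertI finite.emptyI finite_subset)
    have fg: "finite {w. g0 w \<noteq> 0}" using g0X unfolding free_alg_def by auto
    have p0: "p = (\<lambda>w. 0)" using mult_nonzero[OF fp fg _ g0nz] pg by blast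
    have t0: "t [] = 0" using tX unfolding free_alg_def by auto
    have "t = d"
    proof
      fix w
      show "t w = d w"
      proof (cases "w = []")
        case True
        then show ?thesis using t0 unfolding d_def dl_def by simp
      next
        case False
        then show ?thesis using fun_cong[OF p0, of w] unfolding p_def by simp
      qed
    qed
    then show ?thesis using t unfolding d_def by simp
  qed
  have wI: "dl w \<in> I" if "w \<noteq> []" "set w \<subseteq> X" for w :: "'x list"
  proof (cases w)
    case Nil
    then show ?thesis using that by simp
  next
    case (Cons x w')
    show ?thesis
    proof (cases "w' = []")
      case True
      then show ?thesis using Cons that xI by simp
    next
      case False
      have w'X: "(dl w' :: 'x list \<Rightarrow> 'k) \<in> free_alg X" using False that Cons by (intro dl_in) auto
      have "x \<in> X" using that Cons by simp
      then have m: "fa_mult (dl [x]) (dl w') \<in> I" using Imul[OF xI w'X] by blast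
      have "fa_mult (dl [x]) (dl w') = (dl w :: 'x list \<Rightarrow> 'k)"
        using Cons by (simp add: dl_Cons_mult)
      then show ?thesis using m by simp
    qed
  qed
  have fin: "\<forall>f \<in> (free_alg X :: ('x list \<Rightarrow> 'k) set). {w. f w \<noteq> 0} \<subseteq> S \<longrightarrow> f \<in> I" if "finite S" for S
    using that
  proof (induction S rule: finite_induct)
    case empty
    show ?case
    proof (intro ballI impI)
      fix f :: "'x list \<Rightarrow> 'k" assume "{w. f w \<noteq> 0} \<subseteq> {}"
      then have "f = (\<lambda>w. 0)" by auto
      then show "f \<in> I" using I0 by simp
    qed
  next
    case (insert w S)
    show ?case
    proof (intro ballI impI)
      fix f :: "'x list \<Rightarrow> 'k" assume fX: "f \<in> free_alg X" and sf: "{w. f w \<noteq> 0} \<subseteq> insert w S"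
      define f' where "f' = (\<lambda>v. if v = w then 0 else f v)"
      have "{v. f' v \<noteq> 0} \<subseteq> {v. f v \<noteq> 0}" unfolding f'_def by auto
      then have "finite {v. f' v \<noteq> 0}" using fX unfolding free_alg_def by (auto intro: finite_subset)
      then have "f' \<in> free_alg X" using fX unfolding free_alg_def f'_def by auto
      moreover have "{v. f' v \<noteq> 0} \<subseteq> S" using sf unfolding f'_def by auto
      ultimately have f'I: "f' \<in> I" using insert.IH by blast
      have sI: "fa_smult (f w) (dl w) \<in> I"
      proof (cases "f w = 0")
        case True
        have "fa_smult (f w) (dl w) = (\<lambda>v. 0)" using True by (simp add: fa_smult_def)
        then show ?thesis using I0 by simp
      next
        case False
        then have "w \<noteq> [] \<and> set w \<subseteq> X" using fX unfolding free_alg_def by auto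
        then show ?thesis using wI Ism by blast
      qed
      have feq: "f = fa_add f' (fa_smult (f w) (dl w))"
        unfolding fa_add_def fa_smult_def f'_def dl_def by auto
      show "f \<in> I" by (subst feq) (rule Iadd[OF f'I sI])
    qed
  qed
  have "free_alg X \<subseteq> I"
  proof
    fix f :: "'x list \<Rightarrow> 'k" assume "f \<in> free_alg X"
    moreover then have "finite {w. f w \<noteq> 0}" unfolding free_alg_def by auto
    ultimately show "f \<in> I" using fin by blast
  qed
  then show False using Isub assms(2) by blast
qed

end
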